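(* Let $\mathfrak X$ be a separable Banach space and let $(\Omega,\mathcal F,\mu)$ be a measure space with $\mu$ a positive finite measure. Let $X:\Omega\to\mathcal K(\mathfrak X)$ be an integrably bounded random closed set, and let $a\in\mathfrak X$. Then \[ \int_\Omega X\,d\mu=\{a\} \] holds if and only if there exists $x\in L^1[\Omega;\mathfrak X]$ such that $X(\omega)=\{x(\omega)\}$ for $\mu$-a.e. $\omega$ and $\int_\Omega x\,d\mu=a$.
   Context: $\mathcal K(\mathfrak X)$ denotes the nonempty closed subsets of $\mathfrak X$. A random closed set $X$ is an (Effros-)measurable map $\Omega\to\mathcal K(\mathfrak X)$. It is integrably bounded, written $X\in L^1[\Omega;\mathcal K(\mathfrak X)]$, if $\omega\mapsto\sup\{\|y\|:y\in X(\omega)\}$ is $\mu$-integrable. $S_X$ denotes the set of integrable selections of $X$, i.e. those $x\in L^1[\Omega;\mathfrak X]$ with $x(\omega)\in X(\omega)$ for $\mu$-a.e. $\omega$. The Aumann integral is $\int_\Omega X\,d\mu=\{\int_\Omega x\,d\mu : x\in S_X\}$, where the integrals are Bochner integrals. *)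

theory Defs
  imports "HOL-Analysis.Analysis"
begin

definition effros_measurable :: "'a measure \<Rightarrow> ('a \<Rightarrow> 'b::topological_space set) \<Rightarrow> bool" where
  "effros_measurable M X \<longleftrightarrow> (\<forall>U. open U \<longrightarrow> {\<omega>\<in>space M. X \<omega> \<inter> U \<noteq> {}} \<in> sets M)"

definition random_closed_set :: "'a measure \<Rightarrow> ('a \<Rightarrow> 'b::topological_space set) \<Rightarrow> bool" where
  "random_closed_set M X \<longleftrightarrow>
     (\<forall>\<omega>\<in>space M. X \<omega> \<noteq> {} \<and> closed (X \<omega>)) \<and> effros_measurable M X"

definition integrably_bounded :: "'a measure \<Rightarrow> ('a \<Rightarrow> 'b::real_normed_vector set) \<Rightarrow> bool" where
  "integrably_bounded M X \<longleftrightarrow>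
     (\<lambda>\<omega>. SUP y\<in>X \<omega>. ennreal (norm y)) \<in> borel_measurable M \<and>
     (\<integral>\<^sup>+\<omega>. (SUP y\<in>X \<omega>. ennreal (norm y)) \<partial>M) < \<infinity>"

definition integrable_selections ::
  "'a measure \<Rightarrow> ('a \<Rightarrow> 'b::{banach, second_countable_topology} set) \<Rightarrow> ('a \<Rightarrow> 'b) set" where
  "integrable_selections M X = {x. integrable M x \<and> (AE \<omega> in M. x \<omega> \<in> X \<omega>)}"

definition aumann_integral ::
  "'a measure \<Rightarrow> ('a \<Rightarrow> 'b::{banach, second_countable_topology} set) \<Rightarrow> 'b set" where
  "aumann_integral M X = (\<lambda>x. integral\<^sup>L M x) ` integrable_selections M X"

end

theory Submission
  imports Defs
begin

lemma krn:
  fixes X :: "'a \<Rightarrow> 'b::banach set" and d :: "nat \<Rightarrow> 'b" and f0 :: "'a \<Rightarrow> nat"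
  assumes dense: "\<And>y r. 0 < r \<Longrightarrow> \<exists>k. dist (d k) y < r"
    and cl: "\<And>\<omega>. \<omega> \<in> space M \<Longrightarrow> closed (X \<omega>)"
    and eff: "effros_measurable M X"
    and f0: "f0 \<in> M \<rightarrow>\<^sub>M count_space UNIV"
    and e: "0 < e"
    and start: "\<And>\<omega>. \<omega> \<in> space M \<Longrightarrow> X \<omega> \<inter> ball (d (f0 \<omega>)) e \<noteq> {}"
  shows "\<exists>g. g \<in> borel_measurable M \<and> (\<forall>\<omega>\<in>space M. g \<omega> \<in> X \<omega> \<and> dist (g \<omega>) (d (f0 \<omega>)) \<le> 3*e)"
proof -
  define F where "F = rec_nat f0 (\<lambda>n h \<omega>. LEAST k. X \<omega> \<inter> ball (d k) (e/2^Suc n) \<inter> ball (d (h \<omega>)) (e/2^n) \<noteq> {})"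
  have F0: "F 0 = f0" by (simp add: F_def)
  have FS: "F (Suc n) = (\<lambda>\<omega>. LEAST k. X \<omega> \<inter> ball (d k) (e/2^Suc n) \<inter> ball (d (F n \<omega>)) (e/2^n) \<noteq> {})" for n
    by (simp add: F_def)
  have step: "X \<omega> \<inter> ball (d (F (Suc n) \<omega>)) (e/2^Suc n) \<inter> ball (d (F n \<omega>)) (e/2^n) \<noteq> {}"
    if ne: "X \<omega> \<inter> ball (d (F n \<omega>)) (e/2^n) \<noteq> {}" for n \<omega>
  proof -
    obtain y where y: "y \<in> X \<omega>" "y \<in> ball (d (F n \<omega>)) (e/2^n)" using ne by blast
    obtain k where k: "dist (d k) y < e/2^Suc n" using dense[of "e/2^Suc n"] e by auto
    have "\<exists>k. X \<omega> \<inter> ball (d k) (e/2^Suc n) \<inter> ball (d (F n \<omega>)) (e/2^n) \<noteq> {}"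
      using y k by (intro exI[of _ k]) auto
    from LeastI_ex[OF this] show ?thesis unfolding FS by simp
  qed
  have inv: "\<omega> \<in> space M \<Longrightarrow> X \<omega> \<inter> ball (d (F n \<omega>)) (e/2^n) \<noteq> {}" for n \<omega>
  proof (induction n)
    case 0 then show ?case using start by (simp add: F0)
  next
    case (Suc n) then show ?case using step[of \<omega> n] by blast
  qed
  have d1: "dist (d (F (Suc n) \<omega>)) (d (F n \<omega>)) \<le> 3*e/2^Suc n" if om: "\<omega> \<in> space M" for n \<omega>
  proof -
    obtain z where z: "z \<in> ball (d (F (Suc n) \<omega>)) (e/2^Suc n)" "z \<in> ball (d (F n \<omega>)) (e/2^n)"
      using step[OF inv[OF om, of n]] by blast
    have "dist (d (F (Suc n) \<omega>)) (d (F n \<omega>)) \<le> dist (d (F (Suc n) \<omega>)) z + dist z (d (F n \<omega>))"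
      by (rule dist_triangle)
    also have "\<dots> \<le> e/2^Suc n + e/2^n" using z by (simp add: dist_commute less_imp_le)
    also have "\<dots> = 3*e/2^Suc n" by (simp add: field_simps)
    finally show ?thesis .
  qed
  have dk: "dist (d (F (n+k) \<omega>)) (d (F n \<omega>)) \<le> 3*e/2^n - 3*e/2^(n+k)" if "\<omega> \<in> space M" for n k \<omega>
  proof (induction k)
    case 0 then show ?case by simp
  next
    case (Suc k)
    have "dist (d (F (n + Suc k) \<omega>)) (d (F n \<omega>)) \<le> dist (d (F (Suc (n+k)) \<omega>)) (d (F (n+k) \<omega>)) + dist (d (F (n+k) \<omega>)) (d (F n \<omega>))"
      by (simp add: dist_triangle)
    also have "\<dots> \<le> 3*e/2^Suc (n+k) + (3*e/2^n - 3*e/2^(n+k))" using d1[OF that, of "n+k"] Suc by linarith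
    also have "\<dots> = 3*e/2^n - 3*e/2^(n + Suc k)" by (simp add: field_simps)
    finally show ?case .
  qed
  have dmn: "dist (d (F m \<omega>)) (d (F n \<omega>)) \<le> 3*e/2^n" if "\<omega> \<in> space M" "n \<le> m" for m n \<omega>
  proof -
    obtain k where "m = n + k" using \<open>n \<le> m\<close> le_Suc_ex by blast
    then show ?thesis using dk[OF that(1), of n k] e by (simp add: order_trans)
  qed
  have conv: "convergent (\<lambda>n. d (F n \<omega>))" if "\<omega> \<in> space M" for \<omega>
  proof -
    have "Cauchy (\<lambda>n. d (F n \<omega>))"
    proof (rule CauchyI)
      fix r :: real assume r: "0 < r"
      obtain N where N: "6*e/r < 2^N" using real_arch_pow[of 2 "6*e/r"] by auto
      hence N': "6*e/2^N < r" using r by (simp add: field_simps)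
      show "\<exists>N. \<forall>m\<ge>N. \<forall>n\<ge>N. norm (d (F m \<omega>) - d (F n \<omega>)) < r"
      proof (intro exI allI impI)
        fix m n assume "N \<le> m" "N \<le> n"
        have "norm (d (F m \<omega>) - d (F n \<omega>)) = dist (d (F m \<omega>)) (d (F n \<omega>))" by (simp add: dist_norm)
        also have "\<dots> \<le> dist (d (F m \<omega>)) (d (F N \<omega>)) + dist (d (F n \<omega>)) (d (F N \<omega>))"
          by (rule dist_triangle2)
        also have "\<dots> \<le> 3*e/2^N + 3*e/2^N" using dmn[OF that \<open>N \<le> m\<close>] dmn[OF that \<open>N \<le> n\<close>] by linarith
        also have "\<dots> < r" using N' by simp
        finally show "norm (d (F m \<omega>) - d (F n \<omega>)) < r" .
      qed
    qed
    then show ?thesis by (simp add: Cauchy_convergent_iff)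
  qed
  define g where "g \<omega> = lim (\<lambda>n. d (F n \<omega>))" for \<omega>
  have lim: "(\<lambda>n. d (F n \<omega>)) \<longlonglongrightarrow> g \<omega>" if "\<omega> \<in> space M" for \<omega>
    using conv[OF that] unfolding g_def by (simp add: convergent_LIMSEQ_iff)
  have Fm: "F n \<in> M \<rightarrow>\<^sub>M count_space UNIV" for n
  proof (induction n)
    case 0 then show ?case using f0 by (simp add: F0)
  next
    case (Suc n)
    have P: "(\<lambda>\<omega>. X \<omega> \<inter> ball (d k) (e/2^Suc n) \<inter> ball (d (F n \<omega>)) (e/2^n) \<noteq> {}) \<in> M \<rightarrow>\<^sub>M count_space UNIV" for k
    proof -
      have Q: "(\<lambda>\<omega>. X \<omega> \<inter> (ball (d k) (e/2^Suc n) \<inter> ball (d j) (e/2^n)) \<noteq> {}) \<in> M \<rightarrow>\<^sub>M count_space UNIV" for j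
        using eff unfolding effros_measurable_def pred_def
        by (metis (no_types) open_Int open_ball)
      have "(\<lambda>\<omega>. X \<omega> \<inter> (ball (d k) (e/2^Suc n) \<inter> ball (d (F n \<omega>)) (e/2^n)) \<noteq> {}) \<in> M \<rightarrow>\<^sub>M count_space UNIV"
        by (rule measurable_compose_countable[OF Q Suc])
      then show ?thesis by (simp add: Int_assoc)
    qed
    show ?case unfolding FS by (rule measurable_Least[OF P])
  qed
  have gm: "g \<in> borel_measurable M"
  proof (rule borel_measurable_LIMSEQ_metric[OF _ lim])
    fix n show "(\<lambda>\<omega>. d (F n \<omega>)) \<in> borel_measurable M"
      by (rule measurable_compose_countable[OF _ Fm]) simp
  qed
  have "g \<omega> \<in> X \<omega> \<and> dist (g \<omega>) (d (f0 \<omega>)) \<le> 3*e" if \<omega>: "\<omega> \<in> space M" for \<omega>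
  proof
    have "\<forall>n. \<exists>y. y \<in> X \<omega> \<and> dist y (d (F n \<omega>)) < e/2^n"
    proof
      fix n
      obtain y where "y \<in> X \<omega>" "y \<in> ball (d (F n \<omega>)) (e/2^n)" using inv[OF \<omega>, of n] by blast
      then show "\<exists>y. y \<in> X \<omega> \<and> dist y (d (F n \<omega>)) < e/2^n" by (auto simp: dist_commute)
    qed
    then obtain y where y: "\<And>n. y n \<in> X \<omega>" "\<And>n. dist (y n) (d (F n \<omega>)) < e/2^n" by metis
    have "(\<lambda>n. y n - d (F n \<omega>)) \<longlonglongrightarrow> 0"
    proof (rule Lim_null_comparison)
      show "\<forall>\<^sub>F n in sequentially. norm (y n - d (F n \<omega>)) \<le> e/2^n"
        using y(2) by (auto simp: dist_norm less_imp_le)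
      show "(\<lambda>n. e/2^n) \<longlonglongrightarrow> 0" by (rule LIMSEQ_divide_realpow_zero) simp
    qed
    from tendsto_add[OF this lim[OF \<omega>]] have "y \<longlonglongrightarrow> g \<omega>" by simp
    then show "g \<omega> \<in> X \<omega>" using cl[OF \<omega>] y(1) unfolding closed_sequential_limits by blast
    have "dist (d (f0 \<omega>)) (g \<omega>) \<le> 3*e"
    proof (rule Lim_dist_ubound[OF _ lim[OF \<omega>]])
      show "\<forall>\<^sub>F n in sequentially. dist (d (f0 \<omega>)) (d (F n \<omega>)) \<le> 3*e"
        using dmn[OF \<omega>, of 0] by (auto simp: F0 dist_commute)
    qed simp
    then show "dist (g \<omega>) (d (f0 \<omega>)) \<le> 3*e" by (simp add: dist_commute)
  qed
  with gm show ?thesis by blast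
qed


lemma sel_int:
  fixes X :: "'a \<Rightarrow> 'b::{banach, second_countable_topology} set"
  assumes ib: "integrably_bounded M X" and gm: "g \<in> borel_measurable M"
    and sel: "\<And>\<omega>. \<omega> \<in> space M \<Longrightarrow> g \<omega> \<in> X \<omega>"
  shows "integrable M g"
proof (rule integrableI_bounded[OF gm])
  have "(\<integral>\<^sup>+\<omega>. ennreal (norm (g \<omega>)) \<partial>M) \<le> (\<integral>\<^sup>+\<omega>. (SUP y\<in>X \<omega>. ennreal (norm y)) \<partial>M)"
    by (rule nn_integral_mono) (auto intro: SUP_upper sel)
  also have "\<dots> < \<infinity>" using ib unfolding integrably_bounded_def by simp
  finally show "(\<integral>\<^sup>+\<omega>. ennreal (norm (g \<omega>)) \<partial>M) < \<infinity>" .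
qed

theorem proposition3p2:
  fixes M :: "'a measure"
    and X :: "'a \<Rightarrow> 'b::{banach, second_countable_topology} set"
    and a :: 'b
  assumes "finite_measure M"
    and "random_closed_set M X"
    and "integrably_bounded M X"
  shows "aumann_integral M X = {a} \<longleftrightarrow>
         (\<exists>x. integrable M x \<and> (AE \<omega> in M. X \<omega> = {x \<omega>}) \<and> integral\<^sup>L M x = a)"
proof
  assume H: "aumann_integral M X = {a}"
  interpret finite_measure M by (rule assms(1))
  have ne: "\<And>\<omega>. \<omega> \<in> space M \<Longrightarrow> X \<omega> \<noteq> {}" and cl: "\<And>\<omega>. \<omega> \<in> space M \<Longrightarrow> closed (X \<omega>)"
    and eff: "effros_measurable M X"
    using assms(2) unfolding random_closed_set_def by auto
  obtain D :: "'b set" where D: "countable D" "\<And>U. open U \<Longrightarrow> U \<noteq> {} \<Longrightarrow> \<exists>d\<in>D. d \<in> U"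
    by (erule countable_dense_setE)
  have Dne: "D \<noteq> {}" using D(2)[of UNIV] by auto
  define d where "d = from_nat_into D"
  have dense: "\<exists>k. dist (d k) y < r" if r0: "0 < r" for y r
  proof -
    obtain z where z: "z \<in> D" "z \<in> ball y r" using D(2)[of "ball y r"] r0 by auto
    have "d (to_nat_on D z) = z" unfolding d_def using D(1) z(1) by simp
    then show ?thesis using z(2) by (metis dist_commute mem_ball)
  qed
  have effs: "{\<omega>\<in>space M. X \<omega> \<inter> U \<noteq> {}} \<in> sets M" if "open U" for U
    using eff that unfolding effros_measurable_def by auto
  have sel: "\<exists>g. g \<in> borel_measurable M \<and> (\<forall>\<omega>\<in>space M. g \<omega> \<in> X \<omega> \<and> (\<omega> \<in> A \<longrightarrow> dist (g \<omega>) (d k) \<le> 3*r))"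
    if A: "A \<in> sets M" and r: "0 < r" and hit: "\<And>\<omega>. \<omega> \<in> A \<Longrightarrow> X \<omega> \<inter> ball (d k) r \<noteq> {}" for A k r
  proof -
    define f0 where "f0 \<omega> = (if \<omega> \<in> A then k else (LEAST j. X \<omega> \<inter> ball (d j) r \<noteq> {}))" for \<omega>
    have P: "(\<lambda>\<omega>. X \<omega> \<inter> ball (d j) r \<noteq> {}) \<in> M \<rightarrow>\<^sub>M count_space UNIV" for j
      unfolding pred_def using effs by simp
    have f0m: "f0 \<in> M \<rightarrow>\<^sub>M count_space UNIV" unfolding f0_def
      by (rule measurable_If_set) (auto intro: measurable_Least[OF P] simp: A sets.Int_space_eq2)
    have start: "X \<omega> \<inter> ball (d (f0 \<omega>)) r \<noteq> {}" if \<omega>: "\<omega> \<in> space M" for \<omega>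
    proof (cases "\<omega> \<in> A")
      case True then show ?thesis using hit by (simp add: f0_def)
    next
      case False
      obtain y where y: "y \<in> X \<omega>" using ne[OF \<omega>] by auto
      obtain j where "dist (d j) y < r" using dense[OF r] by auto
      then have "\<exists>j. X \<omega> \<inter> ball (d j) r \<noteq> {}" using y by (intro exI[of _ j]) auto
      from LeastI_ex[OF this] show ?thesis using False by (simp add: f0_def)
    qed
    obtain g where g: "g \<in> borel_measurable M" "\<forall>\<omega>\<in>space M. g \<omega> \<in> X \<omega> \<and> dist (g \<omega>) (d (f0 \<omega>)) \<le> 3*r"
      using krn[OF dense cl eff f0m r start] by blast
    then show ?thesis by (intro exI[of _ g]) (auto simp: f0_def)
  qed
  obtain x where xm: "x \<in> borel_measurable M" and xs: "\<forall>\<omega>\<in>space M. x \<omega> \<in> X \<omega>"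
    using sel[of "{}" 1 0] by auto
  have xi: "integrable M x" using sel_int[OF assms(3) xm] xs by blast
  have xAE: "AE \<omega> in M. x \<omega> \<in> X \<omega>" by (rule AE_I2) (use xs in blast)
  have xS: "x \<in> integrable_selections M X"
    unfolding integrable_selections_def using xi xAE by simp
  have xa: "integral\<^sup>L M x = a" using H xS unfolding aumann_integral_def by blast
  have uniq: "AE \<omega> in M. g \<omega> = x \<omega>" if gi: "integrable M g" and gs: "AE \<omega> in M. g \<omega> \<in> X \<omega>" for g
  proof -
    have "AE \<omega> in M. g \<omega> - x \<omega> = 0"
    proof (rule density_zero)
      show "integrable M (\<lambda>\<omega>. g \<omega> - x \<omega>)" using gi xi by simp
      fix A assume A: "A \<in> sets M"
      define h where "h \<omega> = indicat_real A \<omega> *\<^sub>R (g \<omega> - x \<omega>) + x \<omega>" for \<omega>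
      have i1: "integrable M (\<lambda>\<omega>. indicat_real A \<omega> *\<^sub>R (g \<omega> - x \<omega>))"
        using gi xi A by (intro integrable_mult_indicator) auto
      have hi: "integrable M h" unfolding h_def using i1 xi by simp
      have "AE \<omega> in M. h \<omega> \<in> X \<omega>"
        using gs xAE
        by eventually_elim (auto simp: h_def indicator_def)
      then have "h \<in> integrable_selections M X" unfolding integrable_selections_def using hi by auto
      then have "integral\<^sup>L M h = a" using H unfolding aumann_integral_def by blast
      moreover have "integral\<^sup>L M h = integral\<^sup>L M (\<lambda>\<omega>. indicat_real A \<omega> *\<^sub>R (g \<omega> - x \<omega>)) + integral\<^sup>L M x"
        unfolding h_def using i1 xi by simp
      ultimately show "set_lebesgue_integral M A (\<lambda>\<omega>. g \<omega> - x \<omega>) = 0"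
        using xa unfolding set_lebesgue_integral_def by simp
    qed
    then show ?thesis by eventually_elim simp
  qed
  define Ak where "Ak k m = {\<omega>\<in>space M. X \<omega> \<inter> ball (d k) (1/Suc m) \<noteq> {} \<and> 4*(1/Suc m) < dist (x \<omega>) (d k)}" for k m :: nat
  have AkE: "AE \<omega> in M. \<omega> \<notin> Ak k m" for k m
  proof -
    define r :: real where "r = 1/Suc m"
    have r: "0 < r" by (simp add: r_def)
    have s1: "{\<omega>\<in>space M. X \<omega> \<inter> ball (d k) r \<noteq> {}} \<in> sets M" using effs by simp
    have s2: "{\<omega>\<in>space M. 4*r < dist (x \<omega>) (d k)} \<in> sets M" using xm by measurable
    have Aeq: "Ak k m = {\<omega>\<in>space M. X \<omega> \<inter> ball (d k) r \<noteq> {}} \<inter> {\<omega>\<in>space M. 4*r < dist (x \<omega>) (d k)}"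
      unfolding Ak_def r_def by auto
    have As: "Ak k m \<in> sets M" unfolding Aeq by (rule sets.Int[OF s1 s2])
    obtain g where gm: "g \<in> borel_measurable M" and gs: "\<forall>\<omega>\<in>space M. g \<omega> \<in> X \<omega> \<and> (\<omega> \<in> Ak k m \<longrightarrow> dist (g \<omega>) (d k) \<le> 3*r)"
      using sel[OF As r, of k] unfolding Aeq by blast
    have gi: "integrable M g" using sel_int[OF assms(3) gm] gs by blast
    have "AE \<omega> in M. g \<omega> \<in> X \<omega>" by (rule AE_I2) (use gs in blast)
    from uniq[OF gi this] have "AE \<omega> in M. g \<omega> = x \<omega>" .
    then show ?thesis
    proof (rule AE_mp, intro AE_I2 impI)
      fix \<omega> assume \<omega>: "\<omega> \<in> space M" and eq: "g \<omega> = x \<omega>"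
      show "\<omega> \<notin> Ak k m"
      proof
        assume "\<omega> \<in> Ak k m"
        then have "4*r < dist (x \<omega>) (d k)" "dist (g \<omega>) (d k) \<le> 3*r" using gs \<omega> unfolding Aeq by auto
        then show False using eq r by simp
      qed
    qed
  qed
  have "AE \<omega> in M. \<forall>k m. \<omega> \<notin> Ak k m"
    unfolding AE_all_countable using AkE by blast
  then have "AE \<omega> in M. X \<omega> = {x \<omega>}"
  proof (rule AE_mp, intro AE_I2 impI)
    fix \<omega> assume \<omega>: "\<omega> \<in> space M" and nA: "\<forall>k m. \<omega> \<notin> Ak k m"
    show "X \<omega> = {x \<omega>}"
    proof (rule ccontr)
      assume "X \<omega> \<noteq> {x \<omega>}"
      then obtain y where y: "y \<in> X \<omega>" "y \<noteq> x \<omega>" using xs \<omega> by blast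
      define \<delta> where "\<delta> = dist y (x \<omega>)"
      have \<delta>: "0 < \<delta>" using y by (simp add: \<delta>_def)
      have \<delta>5: "0 < \<delta>/5" using \<delta> by simp
      obtain m where m: "inverse (real (Suc m)) < \<delta>/5" using reals_Archimedean[OF \<delta>5] by blast
      define r :: real where "r = 1/Suc m"
      have req: "r = inverse (real (Suc m))" by (simp add: r_def divide_inverse)
      have r: "0 < r" "r < \<delta>/5" using m unfolding req by simp_all
      obtain k where k: "dist (d k) y < r" using dense[OF r(1)] by blast
      have "y \<in> ball (d k) r" using k by simp
      then have h1: "X \<omega> \<inter> ball (d k) r \<noteq> {}" using y(1) by blast
      have h2: "\<delta> \<le> dist y (d k) + dist (d k) (x \<omega>)" unfolding \<delta>_def by (rule dist_triangle)
      have "dist y (d k) < r" using k by (simp add: dist_commute)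
      then have h3: "4*r < dist (x \<omega>) (d k)" using h2 r by (simp add: dist_commute)
      have "\<omega> \<in> Ak k m" unfolding Ak_def using \<omega> h1 h3 by (simp add: r_def)
      then show False using nA by blast
    qed
  qed
  then show "\<exists>x. integrable M x \<and> (AE \<omega> in M. X \<omega> = {x \<omega>}) \<and> integral\<^sup>L M x = a"
    using xi xa by blast
next
  assume "\<exists>x. integrable M x \<and> (AE \<omega> in M. X \<omega> = {x \<omega>}) \<and> integral\<^sup>L M x = a"
  then obtain x where xi: "integrable M x" and xX: "AE \<omega> in M. X \<omega> = {x \<omega>}" and xa: "integral\<^sup>L M x = a"
    by blast
  have xS: "x \<in> integrable_selections M X"
  proof -
    have "AE \<omega> in M. x \<omega> \<in> X \<omega>" using xX by eventually_elim simp
    then show ?thesis unfolding integrable_selections_def using xi by simp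
  qed
  have "integral\<^sup>L M y = a" if "y \<in> integrable_selections M X" for y
  proof -
    have yi: "integrable M y" and ys: "AE \<omega> in M. y \<omega> \<in> X \<omega>"
      using that unfolding integrable_selections_def by auto
    have "AE \<omega> in M. y \<omega> = x \<omega>" using ys xX by eventually_elim auto
    then have "integral\<^sup>L M y = integral\<^sup>L M x"
      using yi xi by (intro integral_cong_AE) auto
    then show ?thesis using xa by simp
  qed
  then show "aumann_integral M X = {a}"
    unfolding aumann_integral_def using xS xa by blast
qed

end
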